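(* In the setting below, fix $k$, parameters $\rho^k>0$, $\beta^k>0$, a point $(y^k,v^k)\in\Upsilon_\tau\times\mathcal V$, and an initial point $y^{k,0}\in\Upsilon_\tau$, and run Algorithm AMA. Suppose it does not terminate, i.e. it generates an infinite sequence $\{(y^{k,j},v^{k,j})\}_{j\ge1}$. Then: (i) the sequence $\{\Psi^k(y^{k,j},v^{k,j})\}_{j\ge1}$ is strictly decreasing and converges to a finite limit; (ii) the sequence $\{(y^{k,j},v^{k,j})\}_{j\ge1}$ has at least one accumulation point; (iii) every accumulation point of $\{(y^{k,j},v^{k,j})\}_{j\ge1}$ is a partially optimal solution of the problem $\min\{\Psi^k(y,v): y\in\Upsilon_\tau,\ v\in\mathcal V\}$.
   Context: Setting. $\mathcal A$ is a finite set of links; $\mathcal V=\{\Delta h: h\ge0,\ \Lambda h=d\}\subset\mathbb R^{|\mathcal A|}$ is the set of feasible link flows, where $\Delta$ is a 0/1 link–route incidence matrix, $\Lambda$ a 0/1 OD–route incidence matrix in which every route belongs to exactly one OD pair and every OD pair has at least one route, and $d>0$ a demand vector (so $\mathcal V$ is a nonempty compact convex polytope in $\mathbb R^{|\mathcal A|}_{\ge0}$). Let $u_a\ge0$, $\mathcal Y=\{y: 0\le y_a\le u_a\ \forall a\}$, $1\le\tau\le|\mathcal A|$ an integer, $\Upsilon_\tau=\{y\in\mathcal Y: |\{a: y_a>0\}|\le\tau\}$. Standing assumptions: for each $a$, the link travel time $t_a(y_a,v_a)$ is continuously differentiable and strictly increasing in $v_a$ for $y_a\ge0$; the expansion cost $G_a(y_a)$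 is nonnegative, continuously differentiable, strictly increasing and convex; $\int_0^{v_a}t_a(y_a,w)\,dw$ and $t_a(y_a,v_a)v_a$ are convex in $(y_a,v_a)$. With $\eta>0$ set $F(y,v)=\sum_a t_a(y_a,v_a)v_a+\eta\sum_a G_a(y_a)$, $f(y,v)=\sum_a\int_0^{v_a}t_a(y_a,w)\,dw$, $g(y)=\min_{v\in\mathcal V}f(y,v)$. Under these assumptions $g$ is convex and continuously differentiable on $\mathcal Y$ (a known fact). Define $\Phi(y,v;\bar y,\bar v)=f(y,v)-g(\bar y)-\nabla g(\bar y)^{\mathsf T}(y-\bar y)$ and $$\Psi^k(y,v)=F(y,v)+\rho^k\,\Phi(y,v;y^k,v^k)+\rho^k\beta^k\|(y-y^k,v-v^k)\|_2^2.$$ Algorithm AMA: for $j=0,1,\dots$: (1) let $v^{k,j+1}$ be the (unique) minimizer of $\Psi^k(y^{k,j},\cdot)$ over $\mathcal V$; (2) let $y^{k,j+1}$ be a minimizer of $\Psi^k(\cdot,v^{k,j+1})$ over $\Upsilon_\tau$; (3) if $(y^{k,j+1},v^{k,j+1})$ is partially optimal, stop and return it. A point $(\bar y,\bar v)\in\Upsilon_\tau\times\mathcal V$ is partially optimal if $\Psi^k(\bar y,\bar v)\le\Psi^k(\bar y,v)$ for all $v\in\mathcal V$ and $\Psi^k(\bar y,\bar v)\le\Psi^k(y,\bar v)$ for all $y\in\Upsilon_\tau$. *)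

theory Defs
  imports "HOL-Analysis.Analysis"
begin

text \<open>Links are indexed by a finite type 'a, routes by a finite type 'r,
  OD pairs by a finite type 'w.
  Delta a r: link a lies on route r (0/1 link-route incidence matrix).
  Lambda w r: route r belongs to OD pair w (0/1 OD-route incidence matrix).\<close>

definition feasible_flows ::
  "('a::finite \<Rightarrow> 'r::finite \<Rightarrow> bool) \<Rightarrow> ('w::finite \<Rightarrow> 'r \<Rightarrow> bool) \<Rightarrow> ('w \<Rightarrow> real) \<Rightarrow> (real^'a) set" where
  "feasible_flows Delta Lambda d =
     {v. \<exists>h::'r \<Rightarrow> real. (\<forall>r. 0 \<le> h r) \<and> (\<forall>w. (\<Sum>r | Lambda w r. h r) = d w)
            \<and> v = (\<chi> a. \<Sum>r | Delta a r. h r)}"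

definition Ybox :: "('a::finite \<Rightarrow> real) \<Rightarrow> (real^'a) set" where
  "Ybox u = {y. \<forall>a. 0 \<le> y $ a \<and> y $ a \<le> u a}"

definition Upsilon :: "('a::finite \<Rightarrow> real) \<Rightarrow> nat \<Rightarrow> (real^'a) set" where
  "Upsilon u \<tau> = {y \<in> Ybox u. card {a. y $ a > 0} \<le> \<tau>}"

definition Fobj :: "('a::finite \<Rightarrow> real \<Rightarrow> real \<Rightarrow> real) \<Rightarrow> ('a \<Rightarrow> real \<Rightarrow> real) \<Rightarrow> real
                    \<Rightarrow> real^'a \<Rightarrow> real^'a \<Rightarrow> real" where
  "Fobj t G \<eta> y v = (\<Sum>a\<in>UNIV. t a (y $ a) (v $ a) * v $ a) + \<eta> * (\<Sum>a\<in>UNIV. G a (y $ a))"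

definition fobj :: "('a::finite \<Rightarrow> real \<Rightarrow> real \<Rightarrow> real) \<Rightarrow> real^'a \<Rightarrow> real^'a \<Rightarrow> real" where
  "fobj t y v = (\<Sum>a\<in>UNIV. integral {0 .. v $ a} (\<lambda>w. t a (y $ a) w))"

text \<open>g(y) = min over V of f(y,v) (the minimum exists; written as an infimum).\<close>
definition gval :: "('a::finite \<Rightarrow> real \<Rightarrow> real \<Rightarrow> real) \<Rightarrow> (real^'a) set \<Rightarrow> real^'a \<Rightarrow> real" where
  "gval t V y = (INF v\<in>V. fobj t y v)"

text \<open>Gradient of a function at x relative to the set S (g is C^1 on the box Y).\<close>
definition grad_within :: "(real^'a::finite \<Rightarrow> real) \<Rightarrow> (real^'a) set \<Rightarrow> real^'a \<Rightarrow> real^'a" where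
  "grad_within h S x = (SOME D. (h has_derivative (\<lambda>z. D \<bullet> z)) (at x within S))"

definition Phi :: "('a::finite \<Rightarrow> real \<Rightarrow> real \<Rightarrow> real) \<Rightarrow> (real^'a) set \<Rightarrow> (real^'a) set
                   \<Rightarrow> real^'a \<Rightarrow> real^'a \<Rightarrow> real^'a \<Rightarrow> real" where
  "Phi t V Y y v ybar = fobj t y v - gval t V ybar
       - grad_within (gval t V) Y ybar \<bullet> (y - ybar)"

text \<open>Psi^k(y,v); the norm on pairs of real^'a is the Euclidean norm of the concatenation.\<close>
definition Psi :: "('a::finite \<Rightarrow> real \<Rightarrow> real \<Rightarrow> real) \<Rightarrow> ('a \<Rightarrow> real \<Rightarrow> real) \<Rightarrow> real
                   \<Rightarrow> (real^'a) set \<Rightarrow> (real^'a) set \<Rightarrow> real \<Rightarrow> real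
                   \<Rightarrow> real^'a \<Rightarrow> real^'a \<Rightarrow> real^'a \<Rightarrow> real^'a \<Rightarrow> real" where
  "Psi t G \<eta> V Y \<rho> \<beta> yk vk y v =
     Fobj t G \<eta> y v + \<rho> * Phi t V Y y v yk + \<rho> * \<beta> * (norm (y - yk, v - vk))\<^sup>2"

definition partially_optimal ::
  "('y \<Rightarrow> 'v \<Rightarrow> real) \<Rightarrow> 'y set \<Rightarrow> 'v set \<Rightarrow> 'y \<Rightarrow> 'v \<Rightarrow> bool" where
  "partially_optimal P Ys Vs yb vb \<longleftrightarrow> yb \<in> Ys \<and> vb \<in> Vs \<and>
     (\<forall>v\<in>Vs. P yb vb \<le> P yb v) \<and> (\<forall>y\<in>Ys. P yb vb \<le> P y vb)"

definition accumulation_point :: "(nat \<Rightarrow> 'b::topological_space) \<Rightarrow> 'b \<Rightarrow> bool" where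
  "accumulation_point s p \<longleftrightarrow> (\<exists>r. strict_mono r \<and> (s \<circ> r) \<longlonglongrightarrow> p)"

definition C1_on2 :: "(real \<times> real) set \<Rightarrow> (real \<Rightarrow> real \<Rightarrow> real) \<Rightarrow> bool" where
  "C1_on2 S \<phi> \<longleftrightarrow> (\<exists>Dy Dv. continuous_on S Dy \<and> continuous_on S Dv \<and>
     (\<forall>p\<in>S. ((\<lambda>q. \<phi> (fst q) (snd q)) has_derivative (\<lambda>h. Dy p * fst h + Dv p * snd h))
              (at p within S)))"

definition C1_on :: "real set \<Rightarrow> (real \<Rightarrow> real) \<Rightarrow> bool" where
  "C1_on S \<phi> \<longleftrightarrow> (\<exists>D. continuous_on S D \<and> (\<forall>x\<in>S. (\<phi> has_real_derivative D x) (at x within S)))"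

end

theory Submission
  imports Defs
begin

lemma int_cont:
  fixes f :: "real \<Rightarrow> real \<Rightarrow> real"
  assumes fc: "continuous_on {q. fst q \<ge> 0} (\<lambda>q. f (fst q) (snd q))"
  shows "continuous_on ({0..} \<times> {0..B}) (\<lambda>q. integral {0..snd q} (f (fst q)))"
proof -
  have fc2: "continuous_on S (\<lambda>x. f (g1 x) (g2 x))"
    if "continuous_on S g1" "continuous_on S g2" "\<And>x. x \<in> S \<Longrightarrow> g1 x \<ge> 0" for S :: "('z::topological_space) set" and g1 g2
  proof -
    have "continuous_on S (\<lambda>x. (g1 x, g2 x))" using that by (intro continuous_intros)
    moreover have "(\<lambda>x. (g1 x, g2 x)) ` S \<subseteq> {q. 0 \<le> fst q}" using that(3) by auto
    ultimately show ?thesis using continuous_on_compose2[OF fc] by fastforce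
  qed
  have eq: "integral {0..snd q} (f (fst q)) =
      integral (cbox 0 B) (\<lambda>w. f (fst q) (min w (snd q))) - (B - snd q) * f (fst q) (snd q)"
    if q: "q \<in> {0..} \<times> {0..B}" for q
  proof -
    obtain s x where qq: "q = (s, x)" and s: "s \<ge> 0" and x: "0 \<le> x" "x \<le> B" using q by auto
    have c1: "continuous_on {0..B} (\<lambda>w. f s (min w x))"
      by (rule fc2) (auto intro!: continuous_intros s)
    have "integral {0..x} (\<lambda>w. f s (min w x)) + integral {x..B} (\<lambda>w. f s (min w x))
        = integral {0..B} (\<lambda>w. f s (min w x))"
      by (rule Henstock_Kurzweil_Integration.integral_combine) (use x c1 integrable_continuous_real in auto)
    moreover have "integral {0..x} (\<lambda>w. f s (min w x)) = integral {0..x} (f s)"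
      by (rule integral_cong) auto
    moreover have "integral {x..B} (\<lambda>w. f s (min w x)) = (B - x) * f s x"
    proof -
      have "integral {x..B} (\<lambda>w. f s (min w x)) = integral {x..B} (\<lambda>w. f s x)"
        by (rule integral_cong) auto
      then show ?thesis using x by simp
    qed
    ultimately show ?thesis using qq by simp
  qed
  have "continuous_on ({0..} \<times> {0..B}) (\<lambda>q. integral (cbox 0 B) (\<lambda>w. f (fst q) (min w (snd q))) - (B - snd q) * f (fst q) (snd q))"
  proof (intro continuous_intros)
    show "continuous_on ({0..} \<times> {0..B}) (\<lambda>q. integral (cbox 0 B) (\<lambda>w. f (fst q) (min w (snd q))))"
      apply (rule integral_continuous_on_param)
      apply (simp add: case_prod_unfold)
      apply (rule fc2)
      by (auto intro!: continuous_intros)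
    show "continuous_on ({0..} \<times> {0..B}) (\<lambda>q. f (fst q) (snd q))"
      by (rule fc2) (auto intro!: continuous_intros)
  qed
  then show ?thesis by (rule continuous_on_eq) (use eq in auto)
qed


lemma Psi_cont_gen:
  fixes t :: "'a::finite \<Rightarrow> real \<Rightarrow> real \<Rightarrow> real" and G :: "'a \<Rightarrow> real \<Rightarrow> real" and S :: "((real^'a) \<times> (real^'a)) set"
  assumes 
   c1: "\<And>a. continuous_on S (\<lambda>p. t a (fst p $ a) (snd p $ a))"
  and c2: "\<And>a. continuous_on S (\<lambda>p. G a (fst p $ a))"
  and c3: "\<And>a. continuous_on S (\<lambda>p. integral {0..snd p $ a} (t a (fst p $ a)))"
  shows "continuous_on S (\<lambda>p. Psi t G \<eta> V Y \<rho> \<beta> yk vk (fst p) (snd p))"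
proof -
  have cf: "continuous_on S (\<lambda>p. fst p)" "continuous_on S (\<lambda>p. snd p)"
    by (rule continuous_on_fst continuous_on_snd continuous_on_id)+
  have d1: "continuous_on S (\<lambda>p. \<Sum>a\<in>UNIV. t a (fst p $ a) (snd p $ a) * snd p $ a)"
    by (rule continuous_on_sum, rule continuous_on_mult[OF c1], rule continuous_on_component[OF cf(2)])
  have d2: "continuous_on S (\<lambda>p. \<Sum>a\<in>UNIV. G a (fst p $ a))"
    by (rule continuous_on_sum, rule c2)
  have d3: "continuous_on S (\<lambda>p. \<Sum>a\<in>UNIV. integral {0..snd p $ a} (t a (fst p $ a)))"
    by (rule continuous_on_sum, rule c3)
  have d4: "continuous_on S (\<lambda>p. grad_within (gval t V) Y yk \<bullet> (fst p - yk))"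
    by (rule continuous_on_inner[OF continuous_on_const continuous_on_diff[OF cf(1) continuous_on_const]])
  have d5: "continuous_on S (\<lambda>p. (norm (fst p - yk, snd p - vk))\<^sup>2)"
    by (intro continuous_on_power continuous_on_norm continuous_on_Pair continuous_on_diff continuous_on_const cf)
  have "continuous_on S (\<lambda>p. Fobj t G \<eta> (fst p) (snd p) + \<rho> * (fobj t (fst p) (snd p) - gval t V yk
       - grad_within (gval t V) Y yk \<bullet> (fst p - yk)) + \<rho> * \<beta> * (norm (fst p - yk, snd p - vk))\<^sup>2)"
    unfolding Fobj_def fobj_def
    by (intro continuous_on_add continuous_on_mult continuous_on_diff continuous_on_const d1 d2 d3 d4 d5)
  then show ?thesis unfolding Psi_def Phi_def .
qed

lemma Psi_cont:
  fixes t :: "'a::finite \<Rightarrow> real \<Rightarrow> real \<Rightarrow> real" and G :: "'a \<Rightarrow> real \<Rightarrow> real"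
  assumes t_C1: "\<forall>a. C1_on2 {p. fst p \<ge> 0} (t a)"
    and G_C1: "\<forall>a. C1_on {0..} (G a)"
  shows "continuous_on (Ybox u \<times> {v. \<forall>a. 0 \<le> v$a \<and> v$a \<le> B})
           (\<lambda>p. Psi t G \<eta> V Y \<rho> \<beta> yk vk (fst p) (snd p))"
proof -
  define S where "S = Ybox u \<times> {v::real^'a. \<forall>a. 0 \<le> v$a \<and> v$a \<le> B}"
  have tc: "continuous_on {q. fst q \<ge> 0} (\<lambda>q. t a (fst q) (snd q))" for a
  proof -
    from t_C1 obtain Dy Dv where
      "\<forall>p\<in>{q. fst q \<ge> 0}. ((\<lambda>q. t a (fst q) (snd q)) has_derivative (\<lambda>h. Dy p * fst h + Dv p * snd h))
              (at p within {q. fst q \<ge> 0})"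
      unfolding C1_on2_def by blast
    then show ?thesis by (intro has_derivative_continuous_on) blast
  qed
  have Gc: "continuous_on {0..} (G a)" for a
  proof -
    from G_C1 obtain D where "\<forall>x\<in>{0..}. (G a has_real_derivative D x) (at x within {0..})"
      unfolding C1_on_def by blast
    then show ?thesis by (intro DERIV_continuous_on) blast
  qed
  have c1: "continuous_on S (\<lambda>p. t a (fst p $ a) (snd p $ a))" for a
  proof -
    have "continuous_on S (\<lambda>p. (fst p $ a, snd p $ a))" by (intro continuous_intros)
    moreover have "(\<lambda>p. (fst p $ a, snd p $ a)) ` S \<subseteq> {q. fst q \<ge> 0}"
      by (auto simp: S_def Ybox_def)
    ultimately have "continuous_on S (\<lambda>x. (\<lambda>q. t a (fst q) (snd q)) ((\<lambda>p. (fst p $ a, snd p $ a)) x))"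
      by (rule continuous_on_compose2[OF tc])
    then show ?thesis by simp
  qed
  have c2: "continuous_on S (\<lambda>p. G a (fst p $ a))" for a
  proof -
    have "continuous_on S (\<lambda>p. fst p $ a)" by (intro continuous_intros)
    moreover have "(\<lambda>p. fst p $ a) ` S \<subseteq> {0..}"
      by (auto simp: S_def Ybox_def)
    ultimately have "continuous_on S (\<lambda>x. G a ((\<lambda>p. fst p $ a) x))"
      by (rule continuous_on_compose2[OF Gc])
    then show ?thesis by simp
  qed
  have c3: "continuous_on S (\<lambda>p. integral {0..snd p $ a} (t a (fst p $ a)))" for a
  proof -
    have ic: "continuous_on ({0..} \<times> {0..B}) (\<lambda>q. integral {0..snd q} (t a (fst q)))"
      by (rule int_cont[OF tc])
    have "continuous_on S (\<lambda>p. (fst p $ a, snd p $ a))" by (intro continuous_intros)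
    moreover have "(\<lambda>p. (fst p $ a, snd p $ a)) ` S \<subseteq> {0..} \<times> {0..B}"
      by (auto simp: S_def Ybox_def)
    ultimately have "continuous_on S (\<lambda>x. (\<lambda>q. integral {0..snd q} (t a (fst q))) ((\<lambda>p. (fst p $ a, snd p $ a)) x))"
      by (rule continuous_on_compose2[OF ic])
    then show ?thesis by simp
  qed
  have "continuous_on S (\<lambda>p. Psi t G \<eta> V Y \<rho> \<beta> yk vk (fst p) (snd p))"
    by (rule Psi_cont_gen[OF c1 c2 c3])
  then show ?thesis by (simp only: S_def)
qed

lemma V_compact:
  fixes Delta :: "'a::finite \<Rightarrow> 'r::finite \<Rightarrow> bool"
    and Lambda :: "'w::finite \<Rightarrow> 'r \<Rightarrow> bool"
  assumes route_od: "\<forall>r. \<exists>!w. Lambda w r"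
  shows "compact (feasible_flows Delta Lambda d)"
proof -
  define H where "H = {h::real^'r. (\<forall>r. 0 \<le> h$r) \<and> (\<forall>w. (\<Sum>r | Lambda w r. h$r) = d w)}"
  define L where "L = (\<lambda>h::real^'r. (\<chi> a. \<Sum>r | Delta a r. h$r) :: real^'a)"
  have eq: "feasible_flows Delta Lambda d = L ` H"
  proof
    show "feasible_flows Delta Lambda d \<subseteq> L ` H"
    proof
      fix v assume "v \<in> feasible_flows Delta Lambda d"
      then obtain h where h: "\<forall>r. 0 \<le> h r" "\<forall>w. (\<Sum>r | Lambda w r. h r) = d w"
        "v = (\<chi> a. \<Sum>r | Delta a r. h r)" unfolding feasible_flows_def by blast
      have "vec_lambda h \<in> H" using h unfolding H_def by simp
      moreover have "v = L (vec_lambda h)" using h unfolding L_def by simp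
      ultimately show "v \<in> L ` H" by blast
    qed
    show "L ` H \<subseteq> feasible_flows Delta Lambda d"
    proof
      fix v assume "v \<in> L ` H"
      then obtain h where "h \<in> H" "v = L h" by blast
      then show "v \<in> feasible_flows Delta Lambda d"
        unfolding feasible_flows_def H_def L_def by (intro CollectI exI[of _ "\<lambda>r. h$r"]) auto
    qed
  qed
  have "closed H"
  proof -
    show ?thesis unfolding H_def
      by (intro closed_Collect_conj closed_Collect_all closed_Collect_le closed_Collect_eq continuous_intros)
  qed
  moreover have "bounded H"
  proof -
    define D where "D = (\<Sum>w\<in>UNIV. \<bar>d w\<bar>)"
    have "h$r \<le> D" if "h \<in> H" for h r
    proof -
      obtain w where w: "Lambda w r" using route_od by blast
      have "h$r = (\<Sum>r' \<in> {r}. h$r')" by simp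
      also have "\<dots> \<le> (\<Sum>r' | Lambda w r'. h$r')"
        by (rule sum_mono2) (use that w in \<open>auto simp: H_def\<close>)
      also have "\<dots> = d w" using that by (auto simp: H_def)
      also have "\<dots> \<le> D" unfolding D_def
        by (rule order_trans[OF abs_ge_self]) (rule member_le_sum, auto)
      finally show ?thesis .
    qed
    then have "H \<subseteq> cbox 0 (\<chi> r. D)"
      by (auto simp: H_def mem_box_cart)
    then show ?thesis using bounded_cbox bounded_subset by blast
  qed
  ultimately have "compact H" using compact_eq_bounded_closed by blast
  moreover have "continuous_on H L" unfolding L_def by (intro continuous_intros)
  ultimately show ?thesis using eq compact_continuous_image by metis
qed

lemma V_nonneg: "v \<in> feasible_flows Delta Lambda d \<Longrightarrow> 0 \<le> v $ a"
  unfolding feasible_flows_def by (auto intro!: sum_nonneg)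

lemma Upsilon_compact: "compact (Upsilon u \<tau>)"
proof -
  have bY: "Ybox u \<subseteq> cbox 0 (\<chi> a. u a)" by (auto simp: Ybox_def mem_box_cart)
  have cY: "closed (Ybox u)"
  proof -
    show ?thesis unfolding Ybox_def
      by (intro closed_Collect_conj closed_Collect_all closed_Collect_le continuous_intros)
  qed
  have "closed (Upsilon u \<tau>)"
    unfolding closed_sequential_limits
  proof (intro allI impI, elim conjE)
    fix f :: "nat \<Rightarrow> real^'a" and l
    assume f: "\<forall>n. f n \<in> Upsilon u \<tau>" and lim: "f \<longlonglongrightarrow> l"
    have "l \<in> Ybox u"
    proof -
      have "\<forall>n. f n \<in> Ybox u" using f by (simp add: Upsilon_def)
      then show ?thesis using closed_sequentially[OF cY _ lim] by blast
    qed
    moreover have "card {a. l$a > 0} \<le> \<tau>"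
    proof -
      have "\<forall>\<^sub>F n in sequentially. \<forall>a. l$a > 0 \<longrightarrow> f n $ a > 0"
      proof (rule eventually_all_finite)
        fix a
        show "\<forall>\<^sub>F n in sequentially. l$a > 0 \<longrightarrow> f n $ a > 0"
        proof (cases "l$a > 0")
          case True
          have fa: "(\<lambda>n. f n $ a) \<longlonglongrightarrow> l$a" using lim by (rule tendsto_vec_nth)
          show ?thesis by (rule eventually_mono[OF order_tendstoD(1)[OF fa True]]) simp
        next
          case False
          then show ?thesis by simp
        qed
      qed
      then obtain N where "\<forall>n\<ge>N. \<forall>a. l$a > 0 \<longrightarrow> f n $ a > 0" unfolding eventually_sequentially by blast
      then have "\<forall>a. l$a > 0 \<longrightarrow> f N $ a > 0" by blast
      then obtain n where "\<forall>a. l$a > 0 \<longrightarrow> f n $ a > 0" by blast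
      then have "card {a. l$a > 0} \<le> card {a. f n $ a > 0}" by (intro card_mono) auto
      also have "\<dots> \<le> \<tau>" using f by (auto simp: Upsilon_def)
      finally show ?thesis .
    qed
    ultimately show "l \<in> Upsilon u \<tau>" by (simp add: Upsilon_def)
  qed
  moreover have "bounded (Upsilon u \<tau>)"
  proof -
    have "Upsilon u \<tau> \<subseteq> cbox 0 (\<chi> a. u a)" using bY by (auto simp: Upsilon_def)
    then show ?thesis using bounded_cbox bounded_subset by blast
  qed
  ultimately show ?thesis using compact_eq_bounded_closed by blast
qed



theorem theorem4p1:
  fixes Delta :: "'a::finite \<Rightarrow> 'r::finite \<Rightarrow> bool"
    and Lambda :: "'w::finite \<Rightarrow> 'r \<Rightarrow> bool"
    and d :: "'w \<Rightarrow> real"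
    and u :: "'a \<Rightarrow> real" and \<tau> :: nat
    and t :: "'a \<Rightarrow> real \<Rightarrow> real \<Rightarrow> real" and G :: "'a \<Rightarrow> real \<Rightarrow> real"
    and \<eta> \<rho> \<beta> :: real
    and yk vk y0 :: "real^'a"
    and ys vs :: "nat \<Rightarrow> real^'a"
  assumes route_od: "\<forall>r. \<exists>!w. Lambda w r"
    and od_route: "\<forall>w. \<exists>r. Lambda w r"
    and d_pos: "\<forall>w. d w > 0"
    and u_nonneg: "\<forall>a. u a \<ge> 0"
    and tau: "1 \<le> \<tau>" "\<tau> \<le> CARD('a)"
    and t_C1: "\<forall>a. C1_on2 {p. fst p \<ge> 0} (t a)"
    and t_mono: "\<forall>a. \<forall>yy\<ge>0. strict_mono (t a yy)"
    and G_nonneg: "\<forall>a. \<forall>yy\<ge>0. G a yy \<ge> 0"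
    and G_C1: "\<forall>a. C1_on {0..} (G a)"
    and G_mono: "\<forall>a. strict_mono_on {0..} (G a)"
    and G_convex: "\<forall>a. convex_on {0..} (G a)"
    and int_convex: "\<forall>a. convex_on {p. fst p \<ge> 0 \<and> snd p \<ge> 0}
                           (\<lambda>p. integral {0 .. snd p} (\<lambda>w. t a (fst p) w))"
    and tv_convex: "\<forall>a. convex_on {p. fst p \<ge> 0 \<and> snd p \<ge> 0} (\<lambda>p. t a (fst p) (snd p) * snd p)"
    and eta: "\<eta> > 0" and rho: "\<rho> > 0" and beta: "\<beta> > 0"
    and yk: "yk \<in> Upsilon u \<tau>" and vk: "vk \<in> feasible_flows Delta Lambda d"
    and init: "ys 0 = y0" "y0 \<in> Upsilon u \<tau>"
    and step_v: "\<forall>j. vs (Suc j) \<in> feasible_flows Delta Lambda d \<and>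
        (\<forall>v\<in>feasible_flows Delta Lambda d.
           Psi t G \<eta> (feasible_flows Delta Lambda d) (Ybox u) \<rho> \<beta> yk vk (ys j) (vs (Suc j))
           \<le> Psi t G \<eta> (feasible_flows Delta Lambda d) (Ybox u) \<rho> \<beta> yk vk (ys j) v)"
    and step_y: "\<forall>j. ys (Suc j) \<in> Upsilon u \<tau> \<and>
        (\<forall>y\<in>Upsilon u \<tau>.
           Psi t G \<eta> (feasible_flows Delta Lambda d) (Ybox u) \<rho> \<beta> yk vk (ys (Suc j)) (vs (Suc j))
           \<le> Psi t G \<eta> (feasible_flows Delta Lambda d) (Ybox u) \<rho> \<beta> yk vk y (vs (Suc j)))"
    and no_stop: "\<forall>j\<ge>1. \<not> partially_optimal
        (Psi t G \<eta> (feasible_flows Delta Lambda d) (Ybox u) \<rho> \<beta> yk vk)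
        (Upsilon u \<tau>) (feasible_flows Delta Lambda d) (ys j) (vs j)"
  shows "(\<forall>j\<ge>1. Psi t G \<eta> (feasible_flows Delta Lambda d) (Ybox u) \<rho> \<beta> yk vk (ys (Suc j)) (vs (Suc j))
                < Psi t G \<eta> (feasible_flows Delta Lambda d) (Ybox u) \<rho> \<beta> yk vk (ys j) (vs j))
       \<and> (\<exists>L::real. (\<lambda>j. Psi t G \<eta> (feasible_flows Delta Lambda d) (Ybox u) \<rho> \<beta> yk vk
                          (ys (Suc j)) (vs (Suc j))) \<longlonglongrightarrow> L)
       \<and> (\<exists>p. accumulation_point (\<lambda>j. (ys (Suc j), vs (Suc j))) p)
       \<and> (\<forall>p. accumulation_point (\<lambda>j. (ys (Suc j), vs (Suc j))) p \<longrightarrow>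
            partially_optimal (Psi t G \<eta> (feasible_flows Delta Lambda d) (Ybox u) \<rho> \<beta> yk vk)
              (Upsilon u \<tau>) (feasible_flows Delta Lambda d) (fst p) (snd p))"
proof -
  define V where "V = feasible_flows Delta Lambda d"
  define Y where "Y = Upsilon u \<tau>"
  define P where "P = Psi t G \<eta> V (Ybox u) \<rho> \<beta> yk vk"
  have sv: "\<forall>j. vs (Suc j) \<in> V \<and> (\<forall>v\<in>V. P (ys j) (vs (Suc j)) \<le> P (ys j) v)"
    using step_v unfolding P_def V_def .
  have sy: "\<forall>j. ys (Suc j) \<in> Y \<and> (\<forall>y\<in>Y. P (ys (Suc j)) (vs (Suc j)) \<le> P y (vs (Suc j)))"
    using step_y unfolding P_def V_def Y_def .
  have ns: "\<forall>j\<ge>1. \<not> partially_optimal P Y V (ys j) (vs j)"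
    using no_stop unfolding P_def V_def Y_def .
  have ysY: "ys j \<in> Y" for j
    using sy init by (cases j) (auto simp: Y_def)
  have cV: "compact V" unfolding V_def by (rule V_compact[OF route_od])
  have cY: "compact Y" unfolding Y_def by (rule Upsilon_compact)
  obtain B where B: "\<forall>v\<in>V. norm v \<le> B"
    using compact_imp_bounded[OF cV] unfolding bounded_iff by blast
  have sub: "Y \<times> V \<subseteq> Ybox u \<times> {v. \<forall>a. 0 \<le> v$a \<and> v$a \<le> B}"
  proof
    fix p assume "p \<in> Y \<times> V"
    then obtain y v where pyv: "p = (y, v)" and yv: "y \<in> Y" "v \<in> V" by blast
    have "y \<in> Ybox u" using yv by (simp add: Y_def Upsilon_def)
    moreover have "0 \<le> v$a \<and> v$a \<le> B" for a
    proof
      show "0 \<le> v$a" using yv V_nonneg unfolding V_def by blast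
      have "v$a \<le> \<bar>v$a\<bar>" by simp
      also have "\<dots> \<le> norm v" by (rule component_le_norm_cart)
      also have "\<dots> \<le> B" using B yv by blast
      finally show "v$a \<le> B" .
    qed
    ultimately show "p \<in> Ybox u \<times> {v. \<forall>a. 0 \<le> v$a \<and> v$a \<le> B}" using pyv by blast
  qed
  have Pc: "continuous_on (Y \<times> V) (\<lambda>p. P (fst p) (snd p))"
    unfolding P_def by (rule continuous_on_subset[OF Psi_cont[OF t_C1 G_C1] sub])
  have cYV: "compact (Y \<times> V)" using cY cV by (rule compact_Times)
  have "compact ((\<lambda>p. P (fst p) (snd p)) ` (Y \<times> V))"
    by (rule compact_continuous_image[OF Pc cYV])
  then have "bounded ((\<lambda>p. P (fst p) (snd p)) ` (Y \<times> V))" by (rule compact_imp_bounded)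
  then obtain M where M: "\<forall>x\<in>(\<lambda>p. P (fst p) (snd p)) ` (Y \<times> V). \<bar>x\<bar> \<le> M"
    unfolding bounded_real by blast
  have M': "\<bar>P (fst q) (snd q)\<bar> \<le> M" if "q \<in> Y \<times> V" for q
    using M that by blast
  have inS: "(ys (Suc j), vs (Suc j)) \<in> Y \<times> V" for j using ysY sv by blast
  have Mb: "-M \<le> P (ys (Suc j)) (vs (Suc j))" for j
  proof -
    have "\<bar>P (ys (Suc j)) (vs (Suc j))\<bar> \<le> M" using M'[OF inS[of j]] by simp
    then show ?thesis by linarith
  qed
  have dec1: "P (ys (Suc j)) (vs (Suc j)) < P (ys j) (vs j)" if j1: "j \<ge> 1" for j
  proof -
    obtain i where j: "j = Suc i" using j1 by (cases j) auto
    have le1: "P (ys (Suc j)) (vs (Suc j)) \<le> P (ys j) (vs (Suc j))" using sy ysY by blast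
    have vjV: "vs j \<in> V" using sv j by blast
    have le2: "P (ys j) (vs (Suc j)) \<le> P (ys j) (vs j)" using sv vjV by blast
    show ?thesis
    proof (rule ccontr)
      assume "\<not> ?thesis"
      then have eq: "P (ys j) (vs (Suc j)) = P (ys j) (vs j)" using le1 le2 by linarith
      have "\<forall>v\<in>V. P (ys j) (vs j) \<le> P (ys j) v"
      proof
        fix v assume v: "v \<in> V"
        have "P (ys j) (vs (Suc j)) \<le> P (ys j) v" using sv v by blast
        then show "P (ys j) (vs j) \<le> P (ys j) v" using eq by simp
      qed
      moreover have "\<forall>y\<in>Y. P (ys j) (vs j) \<le> P y (vs j)" using sy j by blast
      ultimately have "partially_optimal P Y V (ys j) (vs j)"
        unfolding partially_optimal_def using ysY vjV by blast
      with ns j1 show False by blast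
    qed
  qed
  define a where "a = (\<lambda>j. P (ys (Suc j)) (vs (Suc j)))"
  have adec: "decseq a" unfolding decseq_Suc_iff a_def
  proof
    fix j show "P (ys (Suc (Suc j))) (vs (Suc (Suc j))) \<le> P (ys (Suc j)) (vs (Suc j))"
      using dec1[of "Suc j"] by simp
  qed
  have abnd: "\<forall>i. -M \<le> a i" unfolding a_def using Mb by blast
  obtain L where L: "a \<longlonglongrightarrow> L" "\<forall>i. L \<le> a i" using decseq_convergent[OF adec abnd] by blast
  define s where "s = (\<lambda>j. (ys (Suc j), vs (Suc j)))"
  have part2: "\<exists>p. accumulation_point s p"
  proof -
    have "seq_compact (Y \<times> V)" using cYV by (rule compact_imp_seq_compact)
    moreover have "\<forall>n. s n \<in> Y \<times> V" using inS by (simp add: s_def)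
    ultimately obtain l r where "l \<in> Y \<times> V" "strict_mono r" "(s \<circ> r) \<longlonglongrightarrow> l"
      by (rule seq_compactE)
    then show ?thesis unfolding accumulation_point_def by blast
  qed
  have part3: "partially_optimal P Y V (fst p) (snd p)" if acc: "accumulation_point s p" for p
  proof -
    obtain r where r: "strict_mono r" and lim: "(s \<circ> r) \<longlonglongrightarrow> p"
      using acc unfolding accumulation_point_def by blast
    have pin: "p \<in> Y \<times> V"
    proof -
      have "closed (Y \<times> V)" using cYV by (rule compact_imp_closed)
      moreover have "\<forall>n. (s \<circ> r) n \<in> Y \<times> V" using inS by (simp add: s_def)
      ultimately show ?thesis using closed_sequentially[OF _ _ lim] by blast
    qed
    have lim1: "(\<lambda>n. ys (Suc (r n))) \<longlonglongrightarrow> fst p"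
      using tendsto_fst[OF lim] by (simp add: s_def o_def)
    have lim2: "(\<lambda>n. vs (Suc (r n))) \<longlonglongrightarrow> snd p"
      using tendsto_snd[OF lim] by (simp add: s_def o_def)
    have "(\<lambda>n. (\<lambda>q. P (fst q) (snd q)) ((s \<circ> r) n)) \<longlonglongrightarrow> (\<lambda>q. P (fst q) (snd q)) p"
      by (rule continuous_on_tendsto_compose[OF Pc lim pin])
        (rule always_eventually, use inS in \<open>simp add: s_def o_def\<close>)
    then have "(a \<circ> r) \<longlonglongrightarrow> P (fst p) (snd p)" by (simp add: a_def s_def o_def)
    moreover have "(a \<circ> r) \<longlonglongrightarrow> L" using LIMSEQ_subseq_LIMSEQ[OF L(1) r] .
    ultimately have PL: "P (fst p) (snd p) = L" using LIMSEQ_unique by blast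
    have yopt: "P (fst p) (snd p) \<le> P y (snd p)" if y: "y \<in> Y" for y
    proof -
      have "((\<lambda>n. (y, vs (Suc (r n))))) \<longlonglongrightarrow> (y, snd p)" by (intro tendsto_intros lim2)
      then have "(\<lambda>n. (\<lambda>q. P (fst q) (snd q)) (y, vs (Suc (r n)))) \<longlonglongrightarrow> (\<lambda>q. P (fst q) (snd q)) (y, snd p)"
      proof (rule continuous_on_tendsto_compose[OF Pc])
        show "(y, snd p) \<in> Y \<times> V" using y pin by (simp add: mem_Times_iff)
        have "\<forall>n. (y, vs (Suc (r n))) \<in> Y \<times> V" using y inS by blast
        then show "\<forall>\<^sub>F n in sequentially. (y, vs (Suc (r n))) \<in> Y \<times> V" by (rule always_eventually)
      qed
      then have l2: "(\<lambda>n. P y (vs (Suc (r n)))) \<longlonglongrightarrow> P y (snd p)" by simp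
      have "\<forall>n. (a \<circ> r) n \<le> P y (vs (Suc (r n)))" using sy y by (simp add: a_def)
      then have "L \<le> P y (snd p)"
        using LIMSEQ_le[OF LIMSEQ_subseq_LIMSEQ[OF L(1) r] l2] by blast
      then show ?thesis using PL by simp
    qed
    have vopt: "P (fst p) (snd p) \<le> P (fst p) v" if v: "v \<in> V" for v
    proof -
      have "((\<lambda>n. (ys (Suc (r n)), v))) \<longlonglongrightarrow> (fst p, v)" by (intro tendsto_intros lim1)
      then have "(\<lambda>n. (\<lambda>q. P (fst q) (snd q)) (ys (Suc (r n)), v)) \<longlonglongrightarrow> (\<lambda>q. P (fst q) (snd q)) (fst p, v)"
      proof (rule continuous_on_tendsto_compose[OF Pc])
        show "(fst p, v) \<in> Y \<times> V" using v pin by (simp add: mem_Times_iff)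
        have "\<forall>n. (ys (Suc (r n)), v) \<in> Y \<times> V" using v ysY by blast
        then show "\<forall>\<^sub>F n in sequentially. (ys (Suc (r n)), v) \<in> Y \<times> V" by (rule always_eventually)
      qed
      then have l2: "(\<lambda>n. P (ys (Suc (r n))) v) \<longlonglongrightarrow> P (fst p) v" by simp
      have "L \<le> P (ys (Suc (r n))) v" for n
      proof -
        let ?m = "Suc (r n)"
        have "L \<le> a ?m" using L(2) by blast
        also have "\<dots> = P (ys (Suc ?m)) (vs (Suc ?m))" by (simp add: a_def)
        also have "\<dots> \<le> P (ys ?m) (vs (Suc ?m))" using sy ysY by blast
        also have "\<dots> \<le> P (ys ?m) v" using sv v by blast
        finally show ?thesis .
      qed
      then have "L \<le> P (fst p) v" using LIMSEQ_le_const[OF l2] by blast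
      then show ?thesis using PL by simp
    qed
    have "fst p \<in> Y" "snd p \<in> V" using pin by (simp_all add: mem_Times_iff)
    then show ?thesis unfolding partially_optimal_def using yopt vopt by blast
  qed
  have part1: "\<forall>j\<ge>1. P (ys (Suc j)) (vs (Suc j)) < P (ys j) (vs j)" using dec1 by blast
  have "(\<forall>j\<ge>1. P (ys (Suc j)) (vs (Suc j)) < P (ys j) (vs j))
       \<and> (\<exists>L::real. (\<lambda>j. P (ys (Suc j)) (vs (Suc j))) \<longlonglongrightarrow> L)
       \<and> (\<exists>p. accumulation_point (\<lambda>j. (ys (Suc j), vs (Suc j))) p)
       \<and> (\<forall>p. accumulation_point (\<lambda>j. (ys (Suc j), vs (Suc j))) p \<longrightarrow>
            partially_optimal P Y V (fst p) (snd p))"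
  proof (intro conjI)
    show "\<forall>j\<ge>1. P (ys (Suc j)) (vs (Suc j)) < P (ys j) (vs j)" by (rule part1)
    show "\<exists>L::real. (\<lambda>j. P (ys (Suc j)) (vs (Suc j))) \<longlonglongrightarrow> L" using L(1) unfolding a_def by blast
    show "\<exists>p. accumulation_point (\<lambda>j. (ys (Suc j), vs (Suc j))) p" using part2 unfolding s_def .
    show "\<forall>p. accumulation_point (\<lambda>j. (ys (Suc j), vs (Suc j))) p \<longrightarrow>
            partially_optimal P Y V (fst p) (snd p)" using part3 unfolding s_def by blast
  qed
  then show ?thesis unfolding P_def V_def Y_def .
qed

end
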